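(* In the variety $\mathcal V$, the ternary term $p(x,y,z):=\Big(x\wedge\big((z\wedge y)\vee y'\big)\Big)\vee\Big(z\wedge\big((x\wedge y)\vee y'\big)\Big)$ satisfies the identities $p(x,x,z)\approx z$ and $p(x,z,z)\approx x$. Moreover, putting $u:=(x\wedge y)\vee(x\vee y)'$, for every $\mathbf L\in\mathcal V$ and all $x,y,z\in L$ we have: $u\wedge z=z$ and $u'\vee z=z$ if and only if $x=y$.
   Context: $\mathcal V$ is the variety of algebras $(L,\vee,\wedge,{}',0,1)$ that are bounded lattices with a complementation $'$ (i.e. $x\vee x'\approx1$, $x\wedge x'\approx0$) satisfying the identities $x\vee y'\approx y'\vee\big((x\vee y')\wedge y\big)$ and $x\wedge y\approx x\wedge\big((x\wedge y)\vee x'\big)$. *)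

theory Defs
  imports Main
begin

text \<open>An algebra of the variety V: a bounded lattice (type class bounded_lattice,
  with sup, inf, bot = 0, top = 1) together with a unary operation c (the
  complementation x') satisfying the defining identities of V.\<close>

definition in_V :: "('a::bounded_lattice \<Rightarrow> 'a) \<Rightarrow> bool" where
  "in_V c \<longleftrightarrow>
     (\<forall>x. sup x (c x) = top) \<and>
     (\<forall>x. inf x (c x) = bot) \<and>
     (\<forall>x y. sup x (c y) = sup (c y) (inf (sup x (c y)) y)) \<and>
     (\<forall>x y. inf x y = inf x (sup (inf x y) (c x)))"

definition pV :: "('a::bounded_lattice \<Rightarrow> 'a) \<Rightarrow> 'a \<Rightarrow> 'a \<Rightarrow> 'a \<Rightarrow> 'a" where
  "pV c x y z = sup (inf x (sup (inf z y) (c y))) (inf z (sup (inf x y) (c y)))"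

end

theory Submission
  imports Defs
begin

theorem mainTheorem6:
  fixes c :: "'a::bounded_lattice \<Rightarrow> 'a"
  assumes "in_V c"
  shows "(\<forall>x z. pV c x x z = z) \<and> (\<forall>x z. pV c x z z = x) \<and>
         (\<forall>x y z. let u = sup (inf x y) (c (sup x y))
                  in (inf u z = z \<and> sup (c u) z = z) \<longleftrightarrow> x = y)"
proof -
  have A1: "\<And>x. sup x (c x) = top" and A2: "\<And>x. inf x (c x) = bot"
    and A4: "\<And>x y. inf x y = inf x (sup (inf x y) (c x))"
    using assms unfolding in_V_def by blast+
  have P1: "pV c x x z = z" for x z
  proof -
    have "inf x (sup (inf z x) (c x)) = inf x z"
      using A4[of x z] by (simp add: inf_commute)
    thus ?thesis unfolding pV_def using A1[of x]
      by (simp add: inf_commute sup_absorb2)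
  qed
  have P2: "pV c x z z = x" for x z
  proof -
    have "inf z (sup (inf x z) (c z)) = inf z x"
      using A4[of z x] by (simp add: inf_commute)
    thus ?thesis unfolding pV_def using A1[of z]
      by (simp add: inf_commute sup_absorb1)
  qed
  have c1: "c top = bot" using A2[of top] by simp
  have P3: "(inf u z = z \<and> sup (c u) z = z) \<longleftrightarrow> x = y"
    if u: "u = sup (inf x y) (c (sup x y))" for x y z u
  proof
    assume h: "inf u z = z \<and> sup (c u) z = z"
    hence "z \<le> u" "c u \<le> z" by (metis inf.absorb_iff2, metis sup.absorb_iff2)
    hence "c u \<le> u" by simp
    hence "c u = bot" using A2[of u] by (metis inf.absorb2)
    hence u1: "u = top" using A1[of u] by simp
    have "inf x y = inf (sup x y) (sup (inf (sup x y) (inf x y)) (c (sup x y)))"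
      using A4[of "sup x y" "inf x y"]
      by (metis inf.absorb2 inf_le1 le_supI1)
    also have "\<dots> = sup x y"
      using u u1 by (simp add: inf.absorb2 le_supI1)
    finally have "inf x y = sup x y" .
    thus "x = y" by (metis inf.absorb_iff1 inf_le1 inf_le2 sup.cobounded1 sup.cobounded2 order.antisym)
  next
    assume "x = y"
    hence "u = top" using u A1[of x] by simp
    thus "inf u z = z \<and> sup (c u) z = z" using c1 by simp
  qed
  show ?thesis using P1 P2 P3 by (simp add: Let_def)
qed

end
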